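(* For all $m\geq 2$ and $n\geq 1$, \[ s_{n,m}(211,213)=\frac14\Big(\big(2-m\sqrt2\big)\big(1-\sqrt2\big)^{n-1}+\big(2+m\sqrt2\big)\big(1+\sqrt2\big)^{n-1}\Big). \]
   Context: $[n]_m=\{1^m,\ldots,n^m\}$; a permutation of $[n]_m$ is a sequence of length $nm$ in which each element of $[n]$ appears exactly $m$ times. A sequence avoids a pattern $\pi$ if it has no subsequence order-isomorphic to $\pi$ (same relative order and same equalities among entries). $s_{n,m}(\Pi)$ is the number of permutations of $[n]_m$ avoiding all patterns in $\Pi$. *)

theory Defs
  imports Complex_Main
begin

definition contains_pattern :: "nat list \<Rightarrow> nat list \<Rightarrow> bool" where
  "contains_pattern w p \<longleftrightarrow>
     (\<exists>f :: nat \<Rightarrow> nat. strict_mono_on {..<length p} f \<and>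
        (\<forall>i<length p. f i < length w) \<and>
        (\<forall>i<length p. \<forall>j<length p. (w ! f i < w ! f j \<longleftrightarrow> p ! i < p ! j)))"

definition avoids :: "nat list \<Rightarrow> nat list \<Rightarrow> bool" where
  "avoids w p \<longleftrightarrow> \<not> contains_pattern w p"

definition multiperms :: "nat \<Rightarrow> nat \<Rightarrow> nat list set" where
  "multiperms n m = {w. length w = n * m \<and> set w \<subseteq> {1..n} \<and>
                        (\<forall>i\<in>{1..n}. count_list w i = m)}"

definition s_nm :: "nat \<Rightarrow> nat \<Rightarrow> nat list set \<Rightarrow> nat" where
  "s_nm n m \<Pi> = card {w \<in> multiperms n m. \<forall>p\<in>\<Pi>. avoids w p}"

end

theory Submission
  imports Defs
begin

fun bad :: "nat \<Rightarrow> nat list \<Rightarrow> bool" where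
  "bad x [] = False"
| "bad x (y#ys) = ((y < x \<and> (y \<in> set ys \<or> (\<exists>z\<in>set ys. x < z))) \<or> bad x ys)"

fun okw :: "nat list \<Rightarrow> bool" where
  "okw [] = True"
| "okw (x#xs) = (okw xs \<and> \<not> bad x xs)"

lemma bad_idx: "bad x xs \<longleftrightarrow> (\<exists>j k. j<k \<and> k<length xs \<and> xs!j<x \<and> (xs!k=xs!j \<or> x<xs!k))"
proof (induction xs)
  case Nil then show ?case by simp
next
  case (Cons y ys)
  show ?case
  proof
    assume "bad x (y#ys)"
    then consider "y < x" "y \<in> set ys" | z where "y<x" "z \<in> set ys" "x < z" | "bad x ys" by auto
    then show "\<exists>j k. j<k \<and> k<length (y#ys) \<and> (y#ys)!j<x \<and> ((y#ys)!k=(y#ys)!j \<or> x<(y#ys)!k)"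
    proof cases
      case 1
      then obtain k where "k < length ys" "ys!k = y" by (auto simp: in_set_conv_nth)
      then show ?thesis using 1 by (intro exI[of _ 0] exI[of _ "Suc k"]) auto
    next
      case 2
      then obtain k where "k < length ys" "ys!k = z" by (auto simp: in_set_conv_nth)
      then show ?thesis using 2 by (intro exI[of _ 0] exI[of _ "Suc k"]) auto
    next
      case 3
      then obtain j k where "j<k \<and> k<length ys \<and> ys!j<x \<and> (ys!k=ys!j \<or> x<ys!k)" using Cons by auto
      then show ?thesis by (intro exI[of _ "Suc j"] exI[of _ "Suc k"]) auto
    qed
  next
    assume "\<exists>j k. j<k \<and> k<length (y#ys) \<and> (y#ys)!j<x \<and> ((y#ys)!k=(y#ys)!j \<or> x<(y#ys)!k)"
    then obtain j k where jk: "j<k" "k<length (y#ys)" "(y#ys)!j<x" "((y#ys)!k=(y#ys)!j \<or> x<(y#ys)!k)" by blast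
    then obtain k' where k': "k = Suc k'" by (cases k) auto
    show "bad x (y#ys)"
    proof (cases j)
      case 0
      then have "ys!k' \<in> set ys" using jk k' by auto
      then show ?thesis using jk k' 0 by auto
    next
      case (Suc j')
      then have "bad x ys" using Cons jk k' by auto
      then show ?thesis by simp
    qed
  qed
qed

lemma okw_idx: "okw w \<longleftrightarrow> \<not>(\<exists>i j k. i<j \<and> j<k \<and> k<length w \<and> w!j<w!i \<and> (w!k=w!j \<or> w!i<w!k))"
proof (induction w)
  case Nil then show ?case by simp
next
  case (Cons x xs)
  show ?case
  proof
    assume h: "okw (x#xs)"
    show "\<not>(\<exists>i j k. i<j \<and> j<k \<and> k<length (x#xs) \<and> (x#xs)!j<(x#xs)!i \<and> ((x#xs)!k=(x#xs)!j \<or> (x#xs)!i<(x#xs)!k))"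
    proof
      assume "\<exists>i j k. i<j \<and> j<k \<and> k<length (x#xs) \<and> (x#xs)!j<(x#xs)!i \<and> ((x#xs)!k=(x#xs)!j \<or> (x#xs)!i<(x#xs)!k)"
      then obtain i j k where ijk: "i<j" "j<k" "k<length (x#xs)" "(x#xs)!j<(x#xs)!i" "((x#xs)!k=(x#xs)!j \<or> (x#xs)!i<(x#xs)!k)" by blast
      obtain j' where j': "j = Suc j'" using ijk by (cases j) auto
      obtain k' where k': "k = Suc k'" using ijk by (cases k) auto
      show False
      proof (cases i)
        case 0
        then have "bad x xs" unfolding bad_idx using ijk j' k' by (intro exI[of _ j'] exI[of _ k']) auto
        then show ?thesis using h by simp
      next
        case (Suc i')
        then have "\<not> okw xs" unfolding Cons using ijk j' k' by (intro notI) (metis Suc_less_SucD length_Cons nth_Cons_Suc)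
        then show ?thesis using h by simp
      qed
    qed
  next
    assume h: "\<not>(\<exists>i j k. i<j \<and> j<k \<and> k<length (x#xs) \<and> (x#xs)!j<(x#xs)!i \<and> ((x#xs)!k=(x#xs)!j \<or> (x#xs)!i<(x#xs)!k))"
    have "okw xs" unfolding Cons
    proof
      assume "\<exists>i j k. i<j \<and> j<k \<and> k<length xs \<and> xs!j<xs!i \<and> (xs!k=xs!j \<or> xs!i<xs!k)"
      then obtain i j k where "i<j \<and> j<k \<and> k<length xs \<and> xs!j<xs!i \<and> (xs!k=xs!j \<or> xs!i<xs!k)" by blast
      then show False using h by (metis Suc_less_SucD Suc_mono length_Cons nth_Cons_Suc)
    qed
    moreover have "\<not> bad x xs" unfolding bad_idx
    proof
      assume "\<exists>j k. j<k \<and> k<length xs \<and> xs!j<x \<and> (xs!k=xs!j \<or> x<xs!k)"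
      then obtain j k where "j<k \<and> k<length xs \<and> xs!j<x \<and> (xs!k=xs!j \<or> x<xs!k)" by blast
      then have "\<exists>i j k. i<j \<and> j<k \<and> k<length (x#xs) \<and> (x#xs)!j<(x#xs)!i \<and> ((x#xs)!k=(x#xs)!j \<or> (x#xs)!i<(x#xs)!k)"
        by (intro exI[of _ 0] exI[of _ "Suc j"] exI[of _ "Suc k"]) auto
      with h show False by blast
    qed
    ultimately show "okw (x#xs)" by simp
  qed
qed

lemma all3: "(\<forall>i<(3::nat). P i) \<longleftrightarrow> P 0 \<and> P 1 \<and> P 2"
  by (auto simp: numeral_3_eq_3 numeral_2_eq_2 less_Suc_eq)

lemma smono3: "strict_mono_on {..<(3::nat)} f \<longleftrightarrow> f 0 < f 1 \<and> f 1 < (f 2 :: nat)"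
proof
  assume "strict_mono_on {..<(3::nat)} f"
  then show "f 0 < f 1 \<and> f 1 < f 2" using strict_mono_onD[of "{..<3}" f 0 1] strict_mono_onD[of "{..<3}" f 1 2] by auto
next
  assume h: "f 0 < f 1 \<and> f 1 < f 2"
  show "strict_mono_on {..<(3::nat)} f"
    unfolding strict_mono_on_def using h by (auto simp: numeral_3_eq_3 numeral_2_eq_2 less_Suc_eq)
qed

lemma l3: "length [a,b,c] = (3::nat)" by simp

lemma contains_gen:
  "contains_pattern w [a,b,c] \<longleftrightarrow> (\<exists>i j k. i<j \<and> j<k \<and> k<length w \<and>
     (w!i<w!j \<longleftrightarrow> a<b) \<and> (w!j<w!i \<longleftrightarrow> b<a) \<and> (w!i<w!k \<longleftrightarrow> a<c) \<and> (w!k<w!i \<longleftrightarrow> c<a)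
     \<and> (w!j<w!k \<longleftrightarrow> b<c) \<and> (w!k<w!j \<longleftrightarrow> c<b))"
proof
  assume "contains_pattern w [a,b,c]"
  then obtain f where f: "strict_mono_on {..<3} f" "\<forall>i<3. f i < length w"
     "\<forall>i<3. \<forall>j<3. (w ! f i < w ! f j \<longleftrightarrow> [a,b,c] ! i < [a,b,c] ! j)"
    unfolding contains_pattern_def l3 by blast
  then show "\<exists>i j k. i<j \<and> j<k \<and> k<length w \<and>
     (w!i<w!j \<longleftrightarrow> a<b) \<and> (w!j<w!i \<longleftrightarrow> b<a) \<and> (w!i<w!k \<longleftrightarrow> a<c) \<and> (w!k<w!i \<longleftrightarrow> c<a)
     \<and> (w!j<w!k \<longleftrightarrow> b<c) \<and> (w!k<w!j \<longleftrightarrow> c<b)"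
    unfolding smono3 all3 by (intro exI[of _ "f 0"] exI[of _ "f 1"] exI[of _ "f 2"]) simp
next
  assume "\<exists>i j k. i<j \<and> j<k \<and> k<length w \<and>
     (w!i<w!j \<longleftrightarrow> a<b) \<and> (w!j<w!i \<longleftrightarrow> b<a) \<and> (w!i<w!k \<longleftrightarrow> a<c) \<and> (w!k<w!i \<longleftrightarrow> c<a)
     \<and> (w!j<w!k \<longleftrightarrow> b<c) \<and> (w!k<w!j \<longleftrightarrow> c<b)"
  then obtain i j k where h: "i<j \<and> j<k \<and> k<length w \<and>
     (w!i<w!j \<longleftrightarrow> a<b) \<and> (w!j<w!i \<longleftrightarrow> b<a) \<and> (w!i<w!k \<longleftrightarrow> a<c) \<and> (w!k<w!i \<longleftrightarrow> c<a)
     \<and> (w!j<w!k \<longleftrightarrow> b<c) \<and> (w!k<w!j \<longleftrightarrow> c<b)" by blast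
  define f where "f = (\<lambda>t::nat. if t = 0 then i else if t = 1 then j else k)"
  have "strict_mono_on {..<3} f" unfolding smono3 f_def using h by simp
  moreover have "\<forall>t<3. f t < length w" unfolding all3 f_def using h by simp
  moreover have "\<forall>s<3. \<forall>t<3. (w ! f s < w ! f t \<longleftrightarrow> [a,b,c] ! s < [a,b,c] ! t)"
    unfolding all3 f_def using h by simp
  ultimately show "contains_pattern w [a,b,c]" unfolding contains_pattern_def l3 by blast
qed

lemma okw_avoids: "okw w \<longleftrightarrow> avoids w [2,1,1] \<and> avoids w [2,1,3]"
  unfolding avoids_def contains_gen okw_idx
  by (auto simp del: One_nat_def) (metis less_not_sym linorder_neqE_nat)+

lemma bad_append: "bad x (xs@ys) \<longleftrightarrow> bad x xs \<or> bad x ys \<or> (\<exists>y\<in>set xs. y<x \<and> (y\<in>set ys \<or> (\<exists>z\<in>set ys. x<z)))"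
  by (induction xs) auto

lemma bad_ge: "\<forall>y\<in>set xs. x \<le> y \<Longrightarrow> \<not> bad x xs"
  by (induction xs) auto

lemma okw_app1: "okw (xs@ys) \<Longrightarrow> okw xs"
  by (induction xs) (auto simp: bad_append)

lemma okw_app2: "okw (xs@ys) \<Longrightarrow> okw ys"
  by (induction xs) auto

lemma okw_rep: "\<forall>y\<in>set r. l \<le> y \<Longrightarrow> okw (replicate k l @ r) \<longleftrightarrow> okw r"
  by (induction k) (auto simp: bad_append bad_ge)

lemma okw_rep0: "okw (replicate k l)"
  using okw_rep[of "[]" l k] by simp

lemma okw_snoc_gt: "\<forall>x\<in>set xs. z<x \<Longrightarrow> okw (xs@[z]) \<longleftrightarrow> okw xs"
  by (induction xs) (auto simp: bad_append)

lemma okw_snoc2: "\<forall>x\<in>set xs. Suc z<x \<Longrightarrow> okw (xs@[z, Suc z]) \<longleftrightarrow> okw xs"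
  by (induction xs) (auto simp: bad_append)

lemma okw_form3: "\<forall>y\<in>set u. Suc l < y \<Longrightarrow> okw (replicate k (Suc l) @ u @ [l, Suc l]) \<longleftrightarrow> okw u"
proof (induction k)
  case 0 then show ?case using okw_snoc2 by simp
next
  case (Suc k)
  have "\<not> bad (Suc l) (replicate k (Suc l) @ u @ [l, Suc l])"
  proof -
    have "\<not> bad (Suc l) u" using Suc.prems by (intro bad_ge) auto
    then show ?thesis using Suc.prems by (auto simp: bad_append bad_ge)
  qed
  then show ?case using Suc by simp
qed

lemma okw_n2: "okw (replicate a (Suc l) @ l # replicate b (Suc l))"
proof (induction a)
  case 0 then show ?case by (simp add: okw_rep0 bad_ge)
next
  case (Suc a)
  have "\<not> bad (Suc l) (replicate a (Suc l) @ l # replicate b (Suc l))"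
    by (auto simp: bad_append bad_ge)
  then show ?case using Suc by simp
qed

lemma count_rep: "count_list (replicate k a) b = (if a = b then k else 0)"
  by (induction k) auto

lemma N211: "okw (x#xs) \<Longrightarrow> y<x \<Longrightarrow> 2 \<le> count_list xs y \<Longrightarrow> False"
proof -
  assume h: "okw (x#xs)" "y<x" "2 \<le> count_list xs y"
  then have "y \<in> set xs" using count_list_0_iff[of xs y] by linarith
  then obtain ys zs where yz: "xs = ys @ y # zs" "y \<notin> set ys" using split_list_first by metis
  then have "count_list zs y \<ge> 1" using h by simp
  then have "y \<in> set zs" using count_list_0_iff[of zs y] by linarith
  then have "bad x xs" using yz h by (simp add: bad_append)
  then show False using h by simp
qed

lemma N213: "okw (x # ys @ y # zs) \<Longrightarrow> y<x \<Longrightarrow> z\<in>set zs \<Longrightarrow> x<z \<Longrightarrow> False"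
  by (auto simp: bad_append)

definition V :: "nat \<Rightarrow> nat \<Rightarrow> nat \<Rightarrow> nat list set" where
  "V m lo n = {w. length w = n*m \<and> set w \<subseteq> {lo..<lo+n} \<and> (\<forall>i\<in>{lo..<lo+n}. count_list w i = m) \<and> okw w}"

lemma V_finite: "finite (V m lo n)"
proof -
  have "V m lo n \<subseteq> {w. set w \<subseteq> {lo..<lo+n} \<and> length w = n*m}" unfolding V_def by auto
  then show ?thesis using finite_lists_length_eq[of "{lo..<lo+n}" "n*m"] finite_subset by blast
qed

lemma struct:
  assumes m: "m \<ge> 2" and n: "n \<ge> 2" and w: "w \<in> V m lo n"
  shows "(\<exists>r. w = replicate m lo @ r \<and> r \<in> V m (Suc lo) (n-1)) \<or>
         (\<exists>v1 v2. w = replicate (m-1) lo @ v1 @ lo # v2 \<and> v1 \<noteq> [] \<and> lo \<notin> set v1 \<and> lo \<notin> set v2)"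
proof -
  have wl: "length w = n*m" and ws: "set w \<subseteq> {lo..<lo+n}" and wc: "\<forall>i\<in>{lo..<lo+n}. count_list w i = m"
    and wo: "okw w" using w unfolding V_def by auto
  define k where "k = length (takeWhile (\<lambda>x. x = lo) w)"
  define r where "r = dropWhile (\<lambda>x. x = lo) w"
  have tw: "takeWhile (\<lambda>x. x = lo) w = replicate k lo"
    unfolding k_def by (metis (mono_tags) replicate_length_same set_takeWhileD)
  have wr: "w = replicate k lo @ r" unfolding r_def using takeWhile_dropWhile_id[of "\<lambda>x. x = lo" w] tw by simp
  have "count_list w (Suc lo) = m" using wc n by auto
  then have "Suc lo \<in> set w" using m count_list_0_iff[of w "Suc lo"] by auto
  then have "Suc lo \<in> set r" using wr by auto
  then have rne: "r \<noteq> []" by auto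
  then obtain b r' where br: "r = b # r'" by (cases r) auto
  have "b \<noteq> lo" using hd_dropWhile[of "\<lambda>x. x = lo" w] rne br unfolding r_def by simp
  moreover have "b \<in> set w" using wr br by auto
  ultimately have blo: "lo < b" using ws by fastforce
  have ro: "okw r" using wo wr okw_app2 by blast
  have c1: "count_list r' lo \<le> 1"
  proof (rule ccontr)
    assume "\<not> count_list r' lo \<le> 1"
    then show False using N211[of b r' lo] ro br blo by auto
  qed
  have cw: "count_list w lo = m" using wc n by auto
  then have ck: "k + count_list r lo = m" using wr by (simp add: count_rep)
  show ?thesis
  proof (cases "count_list r lo = 0")
    case True
    then have km: "k = m" using ck by simp
    have lonot: "lo \<notin> set r" using True count_list_0_iff by metis
    have "r \<in> V m (Suc lo) (n-1)" unfolding V_def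
    proof (intro CollectI conjI ballI)
      show "length r = (n-1)*m" using wl wr km by (simp add: diff_mult_distrib)
      show "set r \<subseteq> {Suc lo..<Suc lo + (n-1)}"
      proof
        fix x assume "x \<in> set r"
        then have "x \<in> set w" "x \<noteq> lo" using wr lonot by auto
        then show "x \<in> {Suc lo..<Suc lo + (n-1)}" using ws n by fastforce
      qed
      fix i assume "i \<in> {Suc lo..<Suc lo + (n-1)}"
      then have "count_list w i = m" "i \<noteq> lo" using wc n by auto
      then show "count_list r i = m" using wr by (simp add: count_rep)
    next
      show "okw r" by (rule ro)
    qed
    then show ?thesis using wr km by blast
  next
    case False
    then have "lo \<in> set r" using count_list_0_iff by metis
    then obtain v1 v2 where vv: "r = v1 @ lo # v2" "lo \<notin> set v1" using split_list_first by metis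
    have "count_list r lo = 1" using False c1 br \<open>b \<noteq> lo\<close> by simp
    then have "lo \<notin> set v2" using vv by (simp add: count_list_0_iff)
    moreover have "v1 \<noteq> []" using vv br \<open>b \<noteq> lo\<close> by (cases v1) auto
    moreover have "k = m - 1" using ck \<open>count_list r lo = 1\<close> by simp
    ultimately show ?thesis using wr vv by blast
  qed
qed

lemma form2:
  assumes m: "m \<ge> 2" and n: "n \<ge> 2" and w: "w \<in> V m lo n"
    and wf: "w = replicate (m-1) lo @ v1 @ [lo]" and l1: "lo \<notin> set v1"
  shows "v1 \<in> V m (Suc lo) (n-1)"
proof -
  have wl: "length w = n*m" and ws: "set w \<subseteq> {lo..<lo+n}" and wc: "\<forall>i\<in>{lo..<lo+n}. count_list w i = m"
    and wo: "okw w" using w unfolding V_def by auto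
  show ?thesis unfolding V_def
  proof (intro CollectI conjI ballI)
    show "length v1 = (n-1)*m" using wl wf m by (simp add: diff_mult_distrib)
    show "set v1 \<subseteq> {Suc lo..<Suc lo + (n-1)}"
    proof
      fix x assume "x \<in> set v1"
      then have "x \<in> set w" "x \<noteq> lo" using wf l1 by auto
      then show "x \<in> {Suc lo..<Suc lo + (n-1)}" using ws n by fastforce
    qed
    fix i assume "i \<in> {Suc lo..<Suc lo + (n-1)}"
    then have "count_list w i = m" "i \<noteq> lo" using wc n by auto
    then show "count_list v1 i = m" using wf by (simp add: count_rep)
  next
    have "okw (v1 @ [lo])" using wo wf okw_app2 by (metis append.assoc)
    then show "okw v1" using okw_app1 by blast
  qed
qed

lemma form3:
  assumes m: "m \<ge> 2" and n: "n \<ge> 3" and w: "w \<in> V m lo n"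
    and wf: "w = replicate (m-1) lo @ v1 @ lo # v2" and v1ne: "v1 \<noteq> []"
    and l1: "lo \<notin> set v1" and l2: "lo \<notin> set v2" and v2ne: "v2 \<noteq> []"
  shows "\<exists>s. w = replicate (m-1) lo @ replicate (m-1) (Suc lo) @ s @ [lo, Suc lo] \<and> s \<in> V m (Suc (Suc lo)) (n-2)"
proof -
  have wl: "length w = n*m" and ws: "set w \<subseteq> {lo..<lo+n}" and wc: "\<forall>i\<in>{lo..<lo+n}. count_list w i = m"
    and wo: "okw w" using w unfolding V_def by auto
  have gt: "lo < x" if "x \<in> set v1 \<or> x \<in> set v2" for x
  proof -
    have "x \<in> set w" "x \<noteq> lo" using that wf l1 l2 by auto
    then show ?thesis using ws by fastforce
  qed
  have ro: "okw (v1 @ lo # v2)" using wo wf okw_app2 by blast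
  have a: "c \<le> x" if "x \<in> set v1" "c \<in> set v2" for x c
  proof (rule ccontr)
    assume "\<not> c \<le> x"
    obtain a b where ab: "v1 = a @ x # b" using \<open>x \<in> set v1\<close> split_list by metis
    have "okw (x # b @ lo # v2)" using ro ab okw_app2[of a "x # b @ lo # v2"] by simp
    then show False using N213[of x b lo v2 c] gt[of x] that \<open>\<not> c \<le> x\<close> by auto
  qed
  obtain x0 t where x0: "v1 = x0 # t" using v1ne by (cases v1) auto
  have b: "Suc lo \<in> set v1"
  proof (rule ccontr)
    assume nb: "Suc lo \<notin> set v1"
    have "count_list w (Suc lo) = m" using wc n by auto
    then have "count_list v2 (Suc lo) = m" using wf nb by (simp add: count_rep)
    then have "2 \<le> count_list (t @ lo # v2) (Suc lo)" using m by simp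
    moreover have "okw (x0 # t @ lo # v2)" using ro x0 by simp
    moreover have "Suc lo < x0" using gt[of x0] x0 nb by fastforce
    ultimately show False using N211 by blast
  qed
  have c: "c = Suc lo" if "c \<in> set v2" for c using a[OF b that] gt[of c] that by simp
  define j where "j = length (takeWhile (\<lambda>x. x = Suc lo) v1)"
  define s where "s = dropWhile (\<lambda>x. x = Suc lo) v1"
  have tw: "takeWhile (\<lambda>x. x = Suc lo) v1 = replicate j (Suc lo)"
    unfolding j_def by (metis (mono_tags) replicate_length_same set_takeWhileD)
  have vs: "v1 = replicate j (Suc lo) @ s" unfolding s_def using takeWhile_dropWhile_id[of "\<lambda>x. x = Suc lo" v1] tw by simp
  have sne: "s \<noteq> []"
  proof
    assume "s = []"
    have "count_list w (Suc (Suc lo)) = m" using wc n by auto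
    then have "Suc (Suc lo) \<in> set w" using m count_list_0_iff[of w "Suc (Suc lo)"] by auto
    moreover have "w = replicate (m-1) lo @ replicate j (Suc lo) @ lo # v2" using wf vs \<open>s = []\<close> by simp
    ultimately have "Suc (Suc lo) \<in> set v2" by (auto simp: set_replicate_conv_if split: if_splits)
    then show False using c by fastforce
  qed
  then obtain b0 s' where bs: "s = b0 # s'" by (cases s) auto
  have "b0 \<noteq> Suc lo" using hd_dropWhile[of "\<lambda>x. x = Suc lo" v1] sne bs unfolding s_def by simp
  moreover have "lo < b0" using gt[of b0] vs bs by auto
  ultimately have b0gt: "Suc lo < b0" by simp
  have "okw (replicate j (Suc lo) @ (b0 # s' @ lo # v2))" using ro vs bs by simp
  then have "okw (b0 # s' @ lo # v2)" by (rule okw_app2)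
  then have c1: "count_list (s' @ lo # v2) (Suc lo) \<le> 1"
  proof (rule contrapos_pp)
    assume "\<not> count_list (s' @ lo # v2) (Suc lo) \<le> 1"
    then have "2 \<le> count_list (s' @ lo # v2) (Suc lo)" by linarith
    then show "\<not> okw (b0 # s' @ lo # v2)" using N211[of b0 "s' @ lo # v2" "Suc lo"] b0gt by blast
  qed
  have v2r: "v2 = replicate (length v2) (Suc lo)" using c by (metis replicate_length_same)
  then have "count_list v2 (Suc lo) = length v2" by (metis count_rep)
  moreover have "length v2 \<ge> 1" using v2ne by (cases v2) auto
  ultimately have "length v2 = 1" "count_list s' (Suc lo) = 0" using c1 by auto
  then have v2e: "v2 = [Suc lo]" and ns: "Suc lo \<notin> set s" using v2r bs \<open>b0 \<noteq> Suc lo\<close>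
    by (auto simp: count_list_0_iff)
  have "count_list w (Suc lo) = m" using wc n by auto
  then have jm: "j = m - 1" using wf vs v2e ns by (simp add: count_rep)
  have wf3: "w = replicate (m-1) lo @ replicate (m-1) (Suc lo) @ s @ [lo, Suc lo]"
    using wf vs v2e jm by simp
  have ls: "lo \<notin> set s" "Suc lo \<notin> set s" using l1 vs ns by auto
  have "s \<in> V m (Suc (Suc lo)) (n-2)" unfolding V_def
  proof (intro CollectI conjI ballI)
    show "length s = (n-2)*m" using wl wf3 m by (simp add: diff_mult_distrib)
    show "set s \<subseteq> {Suc (Suc lo)..<Suc (Suc lo) + (n-2)}"
    proof
      fix x assume "x \<in> set s"
      then have "x \<in> set w" "x \<noteq> lo" "x \<noteq> Suc lo" using wf3 ls by auto
      then show "x \<in> {Suc (Suc lo)..<Suc (Suc lo) + (n-2)}" using ws n by fastforce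
    qed
    fix i assume "i \<in> {Suc (Suc lo)..<Suc (Suc lo) + (n-2)}"
    then have "count_list w i = m" "i \<noteq> lo" "i \<noteq> Suc lo" using wc n by auto
    then show "count_list s i = m" using wf3 by (simp add: count_rep)
  next
    have "okw (s @ [lo, Suc lo])" using wo wf3 okw_app2 by (metis append.assoc)
    then show "okw s" using okw_app1 by blast
  qed
  then show ?thesis using wf3 by blast
qed

definition "f1 m lo v = replicate m lo @ v"
definition "f2 m lo v = replicate (m-1) lo @ v @ [lo]"
definition "f3 m lo u = replicate (m-1) lo @ replicate (m-1) (Suc lo) @ u @ [lo, Suc lo]"

lemma V_D: "w \<in> V m lo n \<Longrightarrow> length w = n*m \<and> set w \<subseteq> {lo..<lo+n} \<and> (\<forall>i\<in>{lo..<lo+n}. count_list w i = m) \<and> okw w"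
  unfolding V_def by auto

lemma S1: assumes "n \<ge> 1" "v \<in> V m (Suc lo) (n-1)" shows "f1 m lo v \<in> V m lo n"
proof -
  have v: "length v = (n-1)*m" "set v \<subseteq> {Suc lo..<Suc lo+(n-1)}" "\<forall>i\<in>{Suc lo..<Suc lo+(n-1)}. count_list v i = m" "okw v"
    using V_D[OF assms(2)] by auto
  have nl: "lo \<notin> set v" using v(2) by auto
  show ?thesis unfolding V_def f1_def
  proof (intro CollectI conjI ballI)
    show "length (replicate m lo @ v) = n*m" using v assms(1) by (simp add: diff_mult_distrib)
    show "set (replicate m lo @ v) \<subseteq> {lo..<lo+n}" using v(2) assms(1) by (auto simp: set_replicate_conv_if)
    fix i assume i: "i \<in> {lo..<lo+n}"
    show "count_list (replicate m lo @ v) i = m"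
    proof (cases "i = lo")
      case True then show ?thesis using nl by (simp add: count_rep)
    next
      case False then show ?thesis using v(3) i by (simp add: count_rep)
    qed
  next
    show "okw (replicate m lo @ v)" using v okw_rep[of v lo m] by fastforce
  qed
qed

lemma S2: assumes "m \<ge> 1" "n \<ge> 1" "v \<in> V m (Suc lo) (n-1)" shows "f2 m lo v \<in> V m lo n"
proof -
  have v: "length v = (n-1)*m" "set v \<subseteq> {Suc lo..<Suc lo+(n-1)}" "\<forall>i\<in>{Suc lo..<Suc lo+(n-1)}. count_list v i = m" "okw v"
    using V_D[OF assms(3)] by auto
  have nl: "lo \<notin> set v" using v(2) by auto
  show ?thesis unfolding V_def f2_def
  proof (intro CollectI conjI ballI)
    show "length (replicate (m-1) lo @ v @ [lo]) = n*m" using v assms(1,2) by (simp add: diff_mult_distrib)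
    show "set (replicate (m-1) lo @ v @ [lo]) \<subseteq> {lo..<lo+n}" using v(2) assms(2) by (auto simp: set_replicate_conv_if)
    fix i assume i: "i \<in> {lo..<lo+n}"
    show "count_list (replicate (m-1) lo @ v @ [lo]) i = m"
    proof (cases "i = lo")
      case True then show ?thesis using nl assms(1) by (simp add: count_rep)
    next
      case False then show ?thesis using v(3) i by (simp add: count_rep)
    qed
  next
    have "okw (v @ [lo])" using v okw_snoc_gt[of v lo] by fastforce
    then show "okw (replicate (m-1) lo @ v @ [lo])" using v okw_rep[of "v @ [lo]" lo "m-1"] by fastforce
  qed
qed

lemma S3: assumes "m \<ge> 1" "n \<ge> 2" "u \<in> V m (Suc (Suc lo)) (n-2)" shows "f3 m lo u \<in> V m lo n"
proof -
  have v: "length u = (n-2)*m" "set u \<subseteq> {Suc (Suc lo)..<Suc (Suc lo)+(n-2)}" "\<forall>i\<in>{Suc (Suc lo)..<Suc (Suc lo)+(n-2)}. count_list u i = m" "okw u"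
    using V_D[OF assms(3)] by auto
  have nl: "lo \<notin> set u" "Suc lo \<notin> set u" using v(2) by auto
  show ?thesis unfolding V_def f3_def
  proof (intro CollectI conjI ballI)
    have "(n-2)*m + 2*m = n*m" using assms(2) by (metis add_mult_distrib le_add_diff_inverse2)
    then show "length (replicate (m-1) lo @ replicate (m-1) (Suc lo) @ u @ [lo, Suc lo]) = n*m" using v assms(1,2) by simp
    show "set (replicate (m-1) lo @ replicate (m-1) (Suc lo) @ u @ [lo, Suc lo]) \<subseteq> {lo..<lo+n}"
    proof
      fix x assume "x \<in> set (replicate (m-1) lo @ replicate (m-1) (Suc lo) @ u @ [lo, Suc lo])"
      then have "x = lo \<or> x = Suc lo \<or> x \<in> set u" by (auto simp: set_replicate_conv_if split: if_splits)
      then show "x \<in> {lo..<lo+n}" using v(2) assms(2) by fastforce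
    qed
    fix i assume i: "i \<in> {lo..<lo+n}"
    show "count_list (replicate (m-1) lo @ replicate (m-1) (Suc lo) @ u @ [lo, Suc lo]) i = m"
    proof (cases "i = lo \<or> i = Suc lo")
      case True then show ?thesis using nl assms(1) by (auto simp: count_rep)
    next
      case False
      then have "i \<in> {Suc (Suc lo)..<Suc (Suc lo)+(n-2)}" using i assms(2) by auto
      then show ?thesis using v(3) False by (simp add: count_rep)
    qed
  next
    have "okw (replicate (m-1) (Suc lo) @ u @ [lo, Suc lo])" using v okw_form3[of u lo "m-1"] by fastforce
    moreover have "\<forall>y\<in>set (replicate (m-1) (Suc lo) @ u @ [lo, Suc lo]). lo \<le> y" using v(2) by (auto simp: set_replicate_conv_if)
    ultimately show "okw (replicate (m-1) lo @ replicate (m-1) (Suc lo) @ u @ [lo, Suc lo])" using okw_rep by blast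
  qed
qed

lemma V_eq3:
  assumes m: "m \<ge> 2" and n: "n \<ge> 3"
  shows "V m lo n = f1 m lo ` V m (Suc lo) (n-1) \<union> f2 m lo ` V m (Suc lo) (n-1) \<union> f3 m lo ` V m (Suc (Suc lo)) (n-2)"
proof
  show "V m lo n \<subseteq> f1 m lo ` V m (Suc lo) (n-1) \<union> f2 m lo ` V m (Suc lo) (n-1) \<union> f3 m lo ` V m (Suc (Suc lo)) (n-2)"
  proof
    fix w assume w: "w \<in> V m lo n"
    from struct[OF m _ w] n
    consider r where "w = replicate m lo @ r" "r \<in> V m (Suc lo) (n-1)"
      | v1 v2 where "w = replicate (m-1) lo @ v1 @ lo # v2" "v1 \<noteq> []" "lo \<notin> set v1" "lo \<notin> set v2"
      by fastforce
    then show "w \<in> f1 m lo ` V m (Suc lo) (n-1) \<union> f2 m lo ` V m (Suc lo) (n-1) \<union> f3 m lo ` V m (Suc (Suc lo)) (n-2)"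
    proof cases
      case 1 then show ?thesis unfolding f1_def by blast
    next
      case (2 v1 v2)
      show ?thesis
      proof (cases "v2 = []")
        case True
        then have "v1 \<in> V m (Suc lo) (n-1)" using form2[OF m _ w, of v1] 2 n by simp
        then show ?thesis using 2 True unfolding f2_def by auto
      next
        case False
        then obtain s where "w = replicate (m-1) lo @ replicate (m-1) (Suc lo) @ s @ [lo, Suc lo]" "s \<in> V m (Suc (Suc lo)) (n-2)"
          using form3[OF m n w 2] by blast
        then show ?thesis unfolding f3_def by blast
      qed
    qed
  qed
next
  show "f1 m lo ` V m (Suc lo) (n-1) \<union> f2 m lo ` V m (Suc lo) (n-1) \<union> f3 m lo ` V m (Suc (Suc lo)) (n-2) \<subseteq> V m lo n"
    using S1[of n] S2[of m n] S3[of m n] m n by auto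
qed

lemma nth_f1: "m \<ge> 1 \<Longrightarrow> f1 m lo v ! (m-1) = lo"
  unfolding f1_def by (simp add: nth_append)

lemma nth_f2: "m \<ge> 1 \<Longrightarrow> v \<noteq> [] \<Longrightarrow> f2 m lo v ! (m-1) = v ! 0"
  unfolding f2_def by (simp add: nth_append)

lemma nth_f3: "m \<ge> 2 \<Longrightarrow> f3 m lo v ! (m-1) = Suc lo"
  unfolding f3_def by (simp add: nth_append)

lemma card_rec:
  assumes m: "m \<ge> 2" and n: "n \<ge> 3"
  shows "card (V m lo n) = 2 * card (V m (Suc lo) (n-1)) + card (V m (Suc (Suc lo)) (n-2))"
proof -
  let ?A = "V m (Suc lo) (n-1)" and ?B = "V m (Suc (Suc lo)) (n-2)"
  have ne: "v \<noteq> [] \<and> v ! 0 \<noteq> lo" if "v \<in> ?A" for v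
  proof -
    have "length v = (n-1)*m" "set v \<subseteq> {Suc lo..<Suc lo+(n-1)}" using V_D[OF that] by auto
    moreover have "(n-1)*m > 0" using m n by simp
    ultimately have "v \<noteq> []" by auto
    then have "v ! 0 \<in> set v" by simp
    then have "v ! 0 \<in> {Suc lo..<Suc lo+(n-1)}" using \<open>set v \<subseteq> _\<close> by blast
    then show ?thesis using \<open>v \<noteq> []\<close> by simp
  qed
  have d12: "f1 m lo ` ?A \<inter> f2 m lo ` ?A = {}"
  proof (rule ccontr)
    assume "f1 m lo ` ?A \<inter> f2 m lo ` ?A \<noteq> {}"
    then obtain v v' where vv: "v \<in> ?A" "v' \<in> ?A" "f1 m lo v = f2 m lo v'" by blast
    have "lo = f1 m lo v ! (m-1)" using nth_f1[of m lo v] m by simp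
    also have "\<dots> = f2 m lo v' ! (m-1)" using vv by simp
    also have "\<dots> = v' ! 0" using nth_f2[of m v' lo] ne[OF vv(2)] m by simp
    finally show False using ne[OF vv(2)] by simp
  qed
  have d3: "(f1 m lo ` ?A \<union> f2 m lo ` ?A) \<inter> f3 m lo ` ?B = {}"
  proof (rule ccontr)
    assume "(f1 m lo ` ?A \<union> f2 m lo ` ?A) \<inter> f3 m lo ` ?B \<noteq> {}"
    then obtain v u where vu: "v \<in> ?A" "u \<in> ?B" "f1 m lo v = f3 m lo u \<or> f2 m lo v = f3 m lo u" by blast
    show False
    proof (cases "f1 m lo v = f3 m lo u")
      case True
      have "lo = f1 m lo v ! (m-1)" using nth_f1[of m lo v] m by simp
      also have "\<dots> = f3 m lo u ! (m-1)" using True by simp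
      also have "\<dots> = Suc lo" using nth_f3[of m lo u] m by simp
      finally show False by simp
    next
      case False
      then have "f2 m lo v = f3 m lo u" using vu by blast
      then have "last (f2 m lo v) = last (f3 m lo u)" by simp
      then show False unfolding f2_def f3_def by simp
    qed
  qed
  have i1: "inj_on (f1 m lo) X" for X unfolding f1_def inj_on_def by simp
  have i2: "inj_on (f2 m lo) X" for X unfolding f2_def inj_on_def by simp
  have i3: "inj_on (f3 m lo) X" for X unfolding f3_def inj_on_def by simp
  have "card (V m lo n) = card (f1 m lo ` ?A \<union> f2 m lo ` ?A) + card (f3 m lo ` ?B)"
    unfolding V_eq3[OF m n] by (rule card_Un_disjoint) (use V_finite d3 in auto)
  also have "card (f1 m lo ` ?A \<union> f2 m lo ` ?A) = card (f1 m lo ` ?A) + card (f2 m lo ` ?A)"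
    by (rule card_Un_disjoint) (use V_finite d12 in auto)
  finally show ?thesis using card_image[OF i1] card_image[OF i2] card_image[OF i3] by simp
qed

lemma card_1: "m \<ge> 1 \<Longrightarrow> card (V m lo 1) = 1"
proof -
  assume m: "m \<ge> 1"
  have "V m lo 1 = {replicate m lo}"
  proof
    show "V m lo 1 \<subseteq> {replicate m lo}"
    proof
      fix w assume w1: "w \<in> V m lo 1"
      then have "length w = m" "set w \<subseteq> {lo}" using V_D[OF w1] by auto
      then show "w \<in> {replicate m lo}" by (metis replicate_length_same singleton_iff subsetD insertI1 insert_subset)
    qed
    show "{replicate m lo} \<subseteq> V m lo 1" unfolding V_def using m by (auto simp: count_rep okw_rep0 set_replicate_conv_if)
  qed
  then show ?thesis by simp
qed

definition "h2 m lo a = replicate (m-1) lo @ replicate a (Suc lo) @ lo # replicate (m-a) (Suc lo)"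

lemma card_2: assumes m: "m \<ge> 2" shows "card (V m lo 2) = m + 1"
proof -
  have "V m lo 2 = h2 m lo ` {0..m}"
  proof
    show "V m lo 2 \<subseteq> h2 m lo ` {0..m}"
    proof
      fix w assume w: "w \<in> V m lo 2"
      have ws: "set w \<subseteq> {lo, Suc lo}" and wl: "length w = 2*m" using V_D[OF w] by auto
      from struct[OF m _ w]
      consider r where "w = replicate m lo @ r" "r \<in> V m (Suc lo) 1"
        | v1 v2 where "w = replicate (m-1) lo @ v1 @ lo # v2" "v1 \<noteq> []" "lo \<notin> set v1" "lo \<notin> set v2"
        by fastforce
      then show "w \<in> h2 m lo ` {0..m}"
      proof cases
        case 1
        then have "length r = m" "set r \<subseteq> {Suc lo}" using V_D[OF 1(2)] by auto
        then have "r = replicate m (Suc lo)" by (metis replicate_length_same singleton_iff subsetD)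
        moreover obtain k where k: "m = Suc k" using m by (cases m) auto
        ultimately have "w = h2 m lo 0" using 1 unfolding h2_def by (simp add: replicate_append_same[symmetric])
        then show ?thesis by force
      next
        case (2 v1 v2)
        have s1: "set v1 \<subseteq> {Suc lo}" "set v2 \<subseteq> {Suc lo}" using 2 ws by auto
        then have r1: "v1 = replicate (length v1) (Suc lo)" "v2 = replicate (length v2) (Suc lo)"
          by (metis replicate_length_same singleton_iff subsetD)+
        have "length v1 + length v2 = m" using wl 2(1) m by simp
        then have "w = h2 m lo (length v1)" unfolding h2_def using 2(1) r1
          by (metis add_diff_cancel_left')
        moreover have "length v1 \<le> m" using \<open>length v1 + length v2 = m\<close> by simp
        ultimately show ?thesis by force
      qed
    qed
    show "h2 m lo ` {0..m} \<subseteq> V m lo 2"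
    proof
      fix w assume "w \<in> h2 m lo ` {0..m}"
      then obtain a where a: "a \<le> m" "w = h2 m lo a" by auto
      have "okw w" unfolding a h2_def using okw_rep[of "replicate a (Suc lo) @ lo # replicate (m-a) (Suc lo)" lo "m-1"] okw_n2
        by (auto simp: set_replicate_conv_if)
      moreover have "length w = 2*m" using a m unfolding h2_def by simp
      moreover have "set w \<subseteq> {lo..<lo+2}" using a unfolding h2_def by (auto simp: set_replicate_conv_if)
      moreover have "\<forall>i\<in>{lo..<lo+2}. count_list w i = m"
      proof
        fix i assume "i \<in> {lo..<lo+2}"
        then have "i = lo \<or> i = Suc lo" by auto
        then show "count_list w i = m" using a m unfolding h2_def by (auto simp: count_rep)
      qed
      ultimately show "w \<in> V m lo 2" unfolding V_def by blast
    qed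
  qed
  moreover have "inj_on (h2 m lo) {0..m}"
  proof
    fix a b assume ab: "a \<in> {0..m}" "b \<in> {0..m}" "h2 m lo a = h2 m lo b"
    have "length (takeWhile (\<lambda>x. x \<noteq> lo) (drop (m-1) (h2 m lo a))) = a" for a
      unfolding h2_def by simp (subst takeWhile_append2, auto simp: set_replicate_conv_if split: if_splits)
    then show "a = b" using ab by metis
  qed
  ultimately show ?thesis by (simp add: card_image)
qed

fun g :: "nat \<Rightarrow> nat \<Rightarrow> nat" where
  "g m 0 = 1" | "g m (Suc 0) = 1" | "g m (Suc (Suc 0)) = m+1"
| "g m (Suc (Suc (Suc n))) = 2 * g m (Suc (Suc n)) + g m (Suc n)"

lemma card_g: assumes m: "m \<ge> 2" shows "n \<ge> 1 \<Longrightarrow> card (V m lo n) = g m n"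
proof (induction n arbitrary: lo rule: less_induct)
  case (less n)
  show ?case
  proof (cases "n \<ge> 3")
    case True
    then obtain k where k: "n = Suc (Suc (Suc k))" by (intro that[of "n - 3"]) linarith
    have "card (V m lo n) = 2 * card (V m (Suc lo) (n-1)) + card (V m (Suc (Suc lo)) (n-2))"
      using card_rec[OF m True] .
    also have "\<dots> = 2 * g m (n-1) + g m (n-2)" using less.IH[of "n-1"] less.IH[of "n-2"] True by simp
    finally show ?thesis using k by simp
  next
    case False
    then have "n = 1 \<or> n = 2" using less.prems by auto
    then show ?thesis
    proof
      assume "n = 1" then show ?thesis using card_1 m by simp
    next
      assume n2: "n = 2" then show ?thesis using card_2[OF m] by (simp add: numeral_2_eq_2)
    qed
  qed
qed

lemma pow_rec: "(x::real)^2 = 2*x+1 \<Longrightarrow> x^(k+2) = 2*x^(k+1) + x^k"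
proof -
  assume h: "x^2 = 2*x+1"
  have "x^(k+2) = x^k * x^2" by (rule power_add)
  also have "\<dots> = 2*x^(k+1) + x^k" by (subst h) (simp add: algebra_simps)
  finally show ?thesis .
qed

lemma lin: "a2 = 2*a1+a0 \<Longrightarrow> b2 = 2*b1+b0 \<Longrightarrow> 2*((A*a1+B*b1)/4) + (A*a0+B*b0)/4 = ((A*a2 + B*b2)/(4::real))"
  by (simp add: field_simps)

lemma g_formula: "n \<ge> 1 \<Longrightarrow> real (g m n) =
    ((2 - real m * sqrt 2) * (1 - sqrt 2) ^ (n - 1)
     + (2 + real m * sqrt 2) * (1 + sqrt 2) ^ (n - 1)) / 4"
proof (induction n rule: less_induct)
  case (less n)
  have s2: "sqrt 2 * sqrt 2 = (2::real)" by simp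
  have a2: "(1 - sqrt 2)^2 = 2*(1 - sqrt 2) + (1::real)"
    by (simp add: power2_eq_square algebra_simps)
  have b2: "(1 + sqrt 2)^2 = 2*(1 + sqrt 2) + (1::real)"
    by (simp add: power2_eq_square algebra_simps)
  show ?case
  proof (cases "n \<ge> 3")
    case True
    then obtain k where k: "n = Suc (Suc (Suc k))" by (intro that[of "n - 3"]) linarith
    define A where "A = 2 - real m * sqrt 2"
    define B where "B = 2 + real m * sqrt 2"
    have e1: "real (g m (n-1)) = (A * (1 - sqrt 2) ^ (k+1) + B * (1 + sqrt 2) ^ (k+1)) / 4"
      using less.IH[of "n-1"] k unfolding A_def B_def by simp
    have e2: "real (g m (n-2)) = (A * (1 - sqrt 2) ^ k + B * (1 + sqrt 2) ^ k) / 4"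
      using less.IH[of "n-2"] k unfolding A_def B_def by simp
    have "real (g m n) = 2 * real (g m (n-1)) + real (g m (n-2))" using k by simp
    also have "\<dots> = (A * (1 - sqrt 2) ^ (k+2) + B * (1 + sqrt 2) ^ (k+2)) / 4"
      unfolding e1 e2 using lin[OF pow_rec[OF a2, of k] pow_rec[OF b2, of k], of A B] .
    also have "\<dots> = ((2 - real m * sqrt 2) * (1 - sqrt 2) ^ (n - 1)
     + (2 + real m * sqrt 2) * (1 + sqrt 2) ^ (n - 1)) / 4" unfolding A_def B_def using k by simp
    finally show ?thesis .
  next
    case False
    then have "n = 1 \<or> n = 2" using less.prems by auto
    then show ?thesis
    proof
      assume "n = 1" then show ?thesis by simp
    next
      assume n2: "n = 2"
      have "((2 - real m * sqrt 2) * (1 - sqrt 2) + (2 + real m * sqrt 2) * (1 + sqrt 2)) / 4 = real m + 1"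
        by (simp add: algebra_simps s2)
      then show ?thesis using n2 by (simp add: numeral_2_eq_2)
    qed
  qed
qed

lemma set_eq_main: "{w \<in> multiperms n m. \<forall>p\<in>{[2,1,1],[2,1,3]}. avoids w p} = V m 1 n"
proof -
  have e: "{1..<1+n} = {1..n}" by auto
  show ?thesis unfolding multiperms_def V_def e using okw_avoids by auto
qed

theorem mainTheorem11:
  fixes n m :: nat
  assumes "m \<ge> 2" and "n \<ge> 1"
  shows "real (s_nm n m {[2,1,1], [2,1,3]}) =
    ((2 - real m * sqrt 2) * (1 - sqrt 2) ^ (n - 1)
     + (2 + real m * sqrt 2) * (1 + sqrt 2) ^ (n - 1)) / 4"
proof -
  have "s_nm n m {[2,1,1], [2,1,3]} = g m n"
    unfolding s_nm_def set_eq_main using card_g[OF assms(1) assms(2)] .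
  then show ?thesis using g_formula[OF assms(2)] by simp
qed

end
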